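(* Let $G=(V,E)$ be a finite graph and $G_0=(V,E_0)$ a spanning subgraph with $E_0\subseteq E$. Let $q\in\mathbb N$, $\beta\ge0$, and for a graph $H$ on vertex set $V$ let $P_H$ denote the transition matrix of the Swendsen--Wang dynamics for the $q$-state Potts model on $H$ at inverse temperature $\beta$. Then for all $\sigma,\tau\in\{1,\dots,q\}^V$, \[ a_1^{|E\setminus E_0|}\,P_{G_0}(\sigma,\tau)\;\le\;P_G(\sigma,\tau)\;\le\;a_2^{|E\setminus E_0|}\,P_{G_0}(\sigma,\tau), \] where $a_1=a_1(\beta)=e^{-\beta}$ and $a_2=a_2(\beta,q)=1+q(e^\beta-1)$.
   Context: Graphs are finite, parallel edges and loops allowed. For a graph $H=(V,F)$ and $A\subseteq F$, $c(A)$ is the number of connected components of $(V,A)$; for $\sigma\in\{1,\dots,q\}^V$, $F(\sigma)$ is the set of edges of $H$ whose endvertices have the same color in $\sigma$. With $p=1-e^{-\beta}$, the Swendsen--Wang transition matrix on $H$ is $P_H(\sigma,\tau)=(1-p)^{|F(\sigma)|}\sum_{A\subseteq F(\sigma)\cap F(\tau)}\bigl(\tfrac{p}{1-p}\bigr)^{|A|}q^{-c(A)}$. *)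

theory Defs
  imports Complex_Main "HOL-Library.FuncSet"
begin

text \<open>Multigraphs (parallel edges and loops allowed): a vertex set V, edge labels of
type 'e, and an endpoint map ends :: 'e => 'v * 'v. A graph on V is given by a finite
set of edge labels whose endpoints lie in V.\<close>

definition edge_rel :: "('e \<Rightarrow> 'v \<times> 'v) \<Rightarrow> 'e set \<Rightarrow> ('v \<times> 'v) set" where
  "edge_rel ends A = {(u, v). \<exists>e\<in>A. ends e = (u, v) \<or> ends e = (v, u)}"

definition ncomp :: "'v set \<Rightarrow> ('e \<Rightarrow> 'v \<times> 'v) \<Rightarrow> 'e set \<Rightarrow> nat" where
  "ncomp V ends A = card (V // ((edge_rel ends A)\<^sup>* \<inter> (V \<times> V)))"

definition mono_edges :: "('e \<Rightarrow> 'v \<times> 'v) \<Rightarrow> 'e set \<Rightarrow> ('v \<Rightarrow> nat) \<Rightarrow> 'e set" where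
  "mono_edges ends F \<sigma> = {e \<in> F. \<sigma> (fst (ends e)) = \<sigma> (snd (ends e))}"

definition SW_P :: "'v set \<Rightarrow> ('e \<Rightarrow> 'v \<times> 'v) \<Rightarrow> 'e set \<Rightarrow> nat \<Rightarrow> real
                     \<Rightarrow> ('v \<Rightarrow> nat) \<Rightarrow> ('v \<Rightarrow> nat) \<Rightarrow> real" where
  "SW_P V ends F q \<beta> \<sigma> \<tau> =
     (let p = 1 - exp (- \<beta>) in
      (1 - p) ^ card (mono_edges ends F \<sigma>) *
      (\<Sum>A \<in> Pow (mono_edges ends F \<sigma> \<inter> mono_edges ends F \<tau>).
          (p / (1 - p)) ^ card A * inverse (real q ^ ncomp V ends A)))"

end

theory Submission
  imports Defs
begin

lemma edge_rel_sym: "sym (edge_rel ends A)"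
  unfolding sym_def edge_rel_def by auto

lemma rt_sym: "(x, y) \<in> (edge_rel ends A)\<^sup>* \<Longrightarrow> (y, x) \<in> (edge_rel ends A)\<^sup>*"
  by (rule symD[OF sym_rtrancl[OF edge_rel_sym]])

lemma edge_in_rt: "e \<in> A \<Longrightarrow> ends e = (u,v) \<Longrightarrow> (u, v) \<in> (edge_rel ends A)\<^sup>*"
  by (rule r_into_rtrancl) (auto simp: edge_rel_def)

lemma path_char:
  assumes uv: "ends e = (u, v)"
    and "(a, b) \<in> (edge_rel ends (insert e A))\<^sup>*"
  shows "(a, b) \<in> (edge_rel ends A)\<^sup>* \<or>
         ((a, u) \<in> (edge_rel ends A)\<^sup>* \<and> (v, b) \<in> (edge_rel ends A)\<^sup>*) \<or>
         ((a, v) \<in> (edge_rel ends A)\<^sup>* \<and> (u, b) \<in> (edge_rel ends A)\<^sup>*)"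
  using assms(2)
proof (induction rule: rtrancl_induct)
  case base
  then show ?case by simp
next
  case (step b c)
  let ?S = "(edge_rel ends A)\<^sup>*"
  from step.hyps(2) obtain e' where e': "e' \<in> insert e A" "ends e' = (b, c) \<or> ends e' = (c, b)"
    unfolding edge_rel_def by blast
  show ?case
  proof (cases "e' \<in> A")
    case True
    then have "(b, c) \<in> ?S"
      using e'(2) by (intro r_into_rtrancl) (auto simp: edge_rel_def)
    then show ?thesis using step.IH rtrancl_trans[of _ _ "edge_rel ends A"] by metis
  next
    case False
    then have "e' = e" using e' by auto
    then have "(b, c) = (u, v) \<or> (b, c) = (v, u)" using e' uv by auto
    then have bc: "(b = u \<and> c = v) \<or> (b = v \<and> c = u)" by auto
    have tr: "\<And>x y z. (x, y) \<in> ?S \<Longrightarrow> (y, z) \<in> ?S \<Longrightarrow> (x, z) \<in> ?S"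
      by (meson rtrancl_trans)
    have sy: "\<And>x y. (x, y) \<in> ?S \<Longrightarrow> (y, x) \<in> ?S" by (rule rt_sym)
    have rf: "\<And>x. (x, x) \<in> ?S" by simp
    from bc show ?thesis
    proof
      assume h: "b = u \<and> c = v"
      from step.IH show ?thesis
      proof (elim disjE conjE)
        assume "(a, b) \<in> ?S" then show ?thesis using h rf by auto
      next
        assume "(a, u) \<in> ?S" "(v, b) \<in> ?S"
        then have "(a, c) \<in> ?S" using h tr sy by metis
        then show ?thesis by simp
      next
        assume "(a, v) \<in> ?S" "(u, b) \<in> ?S"
        then show ?thesis using h by simp
      qed
    next
      assume h: "b = v \<and> c = u"
      from step.IH show ?thesis
      proof (elim disjE conjE)
        assume "(a, b) \<in> ?S" then show ?thesis using h rf by auto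
      next
        assume "(a, u) \<in> ?S" "(v, b) \<in> ?S"
        then show ?thesis using h by simp
      next
        assume "(a, v) \<in> ?S" "(u, b) \<in> ?S"
        then have "(a, c) \<in> ?S" using h tr sy by metis
        then show ?thesis by simp
      qed
    qed
  qed
qed

lemma ncomp_insert:
  assumes fin: "finite V" and uV: "fst (ends e) \<in> V" and vV: "snd (ends e) \<in> V"
  shows "ncomp V ends A \<le> ncomp V ends (insert e A) + 1"
proof -
  obtain u v where uv: "ends e = (u, v)" by (cases "ends e") auto
  define S where "S = (edge_rel ends A)\<^sup>*"
  define S' where "S' = (edge_rel ends (insert e A))\<^sup>*"
  define R where "R = S \<inter> V \<times> V"
  define R' where "R' = S' \<inter> V \<times> V"
  have symS: "\<And>x y. (x, y) \<in> S \<Longrightarrow> (y, x) \<in> S" unfolding S_def by (rule rt_sym)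
  have trS: "\<And>x y z. (x, y) \<in> S \<Longrightarrow> (y, z) \<in> S \<Longrightarrow> (x, z) \<in> S"
    unfolding S_def by (meson rtrancl_trans)
  have cls: "\<And>x. R `` {x} = {z \<in> V. (x, z) \<in> S} \<or> x \<notin> V" unfolding R_def by auto
  define g where "g X = (if v \<in> X then None else Some (R' `` X))" for X
  have inj: "inj_on g (V // R)"
  proof (rule inj_onI)
    fix X Y assume X: "X \<in> V // R" and Y: "Y \<in> V // R" and gXY: "g X = g Y"
    from X obtain x where x: "x \<in> V" "X = R `` {x}" unfolding quotient_def by blast
    from Y obtain y where y: "y \<in> V" "Y = R `` {y}" unfolding quotient_def by blast
    have Xe: "X = {z \<in> V. (x, z) \<in> S}" using x unfolding R_def by auto
    have Ye: "Y = {z \<in> V. (y, z) \<in> S}" using y unfolding R_def by auto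
    have xy: "(x, y) \<in> S \<Longrightarrow> X = Y" using Xe Ye symS trS by blast
    show "X = Y"
    proof (cases "v \<in> X")
      case True
      then have "v \<in> Y" using gXY unfolding g_def by (auto split: if_splits)
      then show ?thesis using True Xe Ye xy symS trS by blast
    next
      case False
      then have nvY: "v \<notin> Y" using gXY unfolding g_def by (auto split: if_splits)
      have "R' `` X = R' `` Y" using gXY False nvY unfolding g_def by auto
      moreover have "x \<in> R' `` X" using x Xe unfolding R'_def S'_def S_def by auto
      ultimately obtain y' where y': "y' \<in> Y" "(y', x) \<in> S'" unfolding R'_def by blast
      have "(y', x) \<in> S \<or> ((y', u) \<in> S \<and> (v, x) \<in> S) \<or> ((y', v) \<in> S \<and> (u, x) \<in> S)"
        using path_char[OF uv y'(2)[unfolded S'_def]] unfolding S_def .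
      moreover have "v \<in> V" using vV uv by simp
      ultimately have "(y', x) \<in> S" using False nvY Xe Ye y' symS trS by blast
      then have "(y, x) \<in> S" using y' Ye trS by blast
      then show ?thesis using xy symS by blast
    qed
  qed
  have fq: "finite (V // R')" by (rule finite_quotient[OF fin]) (auto simp: R'_def)
  have SS': "S \<subseteq> S'" unfolding S_def S'_def
    by (rule rtrancl_mono) (auto simp: edge_rel_def)
  have trS': "\<And>x y z. (x, y) \<in> S' \<Longrightarrow> (y, z) \<in> S' \<Longrightarrow> (x, z) \<in> S'"
    unfolding S'_def by (meson rtrancl_trans)
  have img: "g ` (V // R) \<subseteq> insert None (Some ` (V // R'))"
  proof
    fix Z assume "Z \<in> g ` (V // R)"
    then obtain X where X: "X \<in> V // R" "Z = g X" by blast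
    from X obtain x where x: "x \<in> V" "X = R `` {x}" unfolding quotient_def by blast
    have "R' `` X = R' `` {x}"
    proof
      show "R' `` X \<subseteq> R' `` {x}" using x SS' trS' unfolding R_def R'_def by blast
      show "R' `` {x} \<subseteq> R' `` X" using x unfolding R_def S_def by auto
    qed
    then show "Z \<in> insert None (Some ` (V // R'))"
      using X x unfolding g_def quotient_def by auto
  qed
  have "card (V // R) \<le> card (insert None (Some ` (V // R')))"
    by (rule card_inj_on_le[OF inj img]) (use fq in auto)
  also have "\<dots> = card (V // R') + 1"
    using fq by (simp add: card_image)
  finally show ?thesis unfolding ncomp_def R_def R'_def S_def S'_def by simp
qed


definition sw :: "'v set \<Rightarrow> ('e \<Rightarrow> 'v \<times> 'v) \<Rightarrow> nat \<Rightarrow> real \<Rightarrow> 'e set \<Rightarrow> real" where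
  "sw V ends q \<beta> N = (\<Sum>A \<in> Pow N. (exp \<beta> - 1) ^ card A * inverse (real q ^ ncomp V ends A))"

lemma SW_unfold:
  "SW_P V ends F q \<beta> \<sigma> \<tau> = exp (- \<beta>) ^ card (mono_edges ends F \<sigma>) *
     sw V ends q \<beta> (mono_edges ends F \<sigma> \<inter> mono_edges ends F \<tau>)"
proof -
  have "(1 - exp (- \<beta>)) / (1 - (1 - exp (- \<beta>))) = exp \<beta> - 1"
    by (simp add: exp_minus field_simps)
  then show ?thesis unfolding SW_P_def sw_def Let_def by simp
qed

lemma sw_nonneg: "\<beta> \<ge> 0 \<Longrightarrow> sw V ends q \<beta> N \<ge> 0"
  unfolding sw_def by (intro sum_nonneg mult_nonneg_nonneg) auto

lemma SW_nonneg: "\<beta> \<ge> 0 \<Longrightarrow> SW_P V ends F q \<beta> \<sigma> \<tau> \<ge> 0"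
  unfolding SW_unfold by (intro mult_nonneg_nonneg sw_nonneg) auto

lemma sw_insert:
  assumes "finite N" "e \<notin> N"
  shows "sw V ends q \<beta> (insert e N) = sw V ends q \<beta> N +
     (\<Sum>A \<in> Pow N. (exp \<beta> - 1) ^ (card A + 1) * inverse (real q ^ ncomp V ends (insert e A)))"
proof -
  let ?f = "\<lambda>A. (exp \<beta> - 1) ^ card A * inverse (real q ^ ncomp V ends A)"
  have inj: "inj_on (insert e) (Pow N)" unfolding inj_on_def
    using assms(2) by (metis PowD insert_ident subsetD)
  have disj: "Pow N \<inter> insert e ` Pow N = {}" using assms(2) by blast
  have "sw V ends q \<beta> (insert e N) = sum ?f (Pow N) + sum ?f (insert e ` Pow N)"
    unfolding sw_def Pow_insert using assms(1) disj by (intro sum.union_disjoint) auto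
  also have "sum ?f (insert e ` Pow N) = sum (?f \<circ> insert e) (Pow N)"
    by (rule sum.reindex[OF inj])
  also have "\<dots> = (\<Sum>A \<in> Pow N. (exp \<beta> - 1) ^ (card A + 1) * inverse (real q ^ ncomp V ends (insert e A)))"
  proof (rule sum.cong)
    fix A assume "A \<in> Pow N"
    then have "finite A" "e \<notin> A" using assms finite_subset by auto
    then show "(?f \<circ> insert e) A = (exp \<beta> - 1) ^ (card A + 1) * inverse (real q ^ ncomp V ends (insert e A))"
      by simp
  qed simp
  finally show ?thesis unfolding sw_def by simp
qed

lemma sw_insert_bound:
  assumes "finite N" "e \<notin> N" "\<beta> \<ge> 0" "q \<ge> 1" "finite V"
    and "fst (ends e) \<in> V" "snd (ends e) \<in> V"
  shows "sw V ends q \<beta> N \<le> sw V ends q \<beta> (insert e N)"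
    "sw V ends q \<beta> (insert e N) \<le> (1 + real q * (exp \<beta> - 1)) * sw V ends q \<beta> N"
proof -
  let ?g = "\<lambda>A. (exp \<beta> - 1) ^ (card A + 1) * inverse (real q ^ ncomp V ends (insert e A))"
  have w0: "exp \<beta> - 1 \<ge> 0" using assms(3) by simp
  have g0: "sum ?g (Pow N) \<ge> 0" using w0 by (intro sum_nonneg mult_nonneg_nonneg) auto
  then show "sw V ends q \<beta> N \<le> sw V ends q \<beta> (insert e N)"
    using sw_insert[OF assms(1,2), of V ends q \<beta>] by simp
  have "sum ?g (Pow N) \<le> (\<Sum>A \<in> Pow N. (real q * (exp \<beta> - 1)) *
          ((exp \<beta> - 1) ^ card A * inverse (real q ^ ncomp V ends A)))"
  proof (rule sum_mono)
    fix A assume "A \<in> Pow N"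
    have q1: "real q \<ge> 1" using assms(4) by simp
    have c: "ncomp V ends A \<le> ncomp V ends (insert e A) + 1"
      by (rule ncomp_insert[where ends=ends and e=e, OF assms(5,6,7)])
    have "real q ^ ncomp V ends A \<le> real q ^ (ncomp V ends (insert e A) + 1)"
      by (rule power_increasing[OF c q1])
    also have "\<dots> = real q * real q ^ ncomp V ends (insert e A)" by simp
    finally have le: "real q ^ ncomp V ends A \<le> real q * real q ^ ncomp V ends (insert e A)" .
    have pos: "real q ^ ncomp V ends A > 0" using q1 by simp
    have posq: "real q > 0" using q1 by simp
    have "inverse (real q ^ ncomp V ends (insert e A)) = real q * inverse (real q * real q ^ ncomp V ends (insert e A))"
      using posq by (simp add: field_simps)
    also have "\<dots> \<le> real q * inverse (real q ^ ncomp V ends A)"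
      using le pos posq by (intro mult_left_mono le_imp_inverse_le) auto
    finally have inv: "inverse (real q ^ ncomp V ends (insert e A)) \<le> real q * inverse (real q ^ ncomp V ends A)" .
    have "?g A = (exp \<beta> - 1) * (exp \<beta> - 1) ^ card A * inverse (real q ^ ncomp V ends (insert e A))"
      by simp
    also have "\<dots> \<le> (exp \<beta> - 1) * (exp \<beta> - 1) ^ card A * (real q * inverse (real q ^ ncomp V ends A))"
      using inv w0 by (intro mult_left_mono) auto
    finally show "?g A \<le> (real q * (exp \<beta> - 1)) * ((exp \<beta> - 1) ^ card A * inverse (real q ^ ncomp V ends A))"
      by (simp add: algebra_simps)
  qed
  also have "\<dots> = real q * (exp \<beta> - 1) * sw V ends q \<beta> N"
    unfolding sw_def by (simp add: sum_distrib_left)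
  finally show "sw V ends q \<beta> (insert e N) \<le> (1 + real q * (exp \<beta> - 1)) * sw V ends q \<beta> N"
    using sw_insert[OF assms(1,2), of V ends q \<beta>] by (simp add: algebra_simps)
qed

lemma mono_insert:
  "mono_edges ends (insert e F) \<sigma> =
     (if \<sigma> (fst (ends e)) = \<sigma> (snd (ends e)) then insert e (mono_edges ends F \<sigma>) else mono_edges ends F \<sigma>)"
  unfolding mono_edges_def by auto

lemma step_bound:
  assumes "finite F" "e \<notin> F" "\<beta> \<ge> 0" "q \<ge> 1" "finite V"
    and "fst (ends e) \<in> V" "snd (ends e) \<in> V"
  shows "exp (- \<beta>) * SW_P V ends F q \<beta> \<sigma> \<tau> \<le> SW_P V ends (insert e F) q \<beta> \<sigma> \<tau>
       \<and> SW_P V ends (insert e F) q \<beta> \<sigma> \<tau> \<le> (1 + real q * (exp \<beta> - 1)) * SW_P V ends F q \<beta> \<sigma> \<tau>"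
proof -
  let ?x = "exp (- \<beta>)"
  let ?a = "1 + real q * (exp \<beta> - 1)"
  let ?P = "SW_P V ends F q \<beta> \<sigma> \<tau>"
  let ?P' = "SW_P V ends (insert e F) q \<beta> \<sigma> \<tau>"
  let ?Ms = "mono_edges ends F \<sigma>" and ?Mt = "mono_edges ends F \<tau>"
  have x1: "?x \<le> 1" using assms(3) by simp
  have x0: "?x > 0" by simp
  have a1: "?a \<ge> 1" using assms(3) by simp
  have P0: "?P \<ge> 0" by (rule SW_nonneg[OF assms(3)])
  have fMs: "finite ?Ms" "e \<notin> ?Ms" using assms(1,2) unfolding mono_edges_def by auto
  have fN: "finite (?Ms \<inter> ?Mt)" "e \<notin> ?Ms \<inter> ?Mt" using fMs by auto
  have s0: "sw V ends q \<beta> (?Ms \<inter> ?Mt) \<ge> 0" by (rule sw_nonneg[OF assms(3)])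
  show ?thesis
  proof (cases "\<sigma> (fst (ends e)) = \<sigma> (snd (ends e))")
    case False
    then have "?P' = ?P" unfolding SW_unfold mono_insert using fMs by (simp add: Int_insert_right)
    moreover have "?x * ?P \<le> ?P" using mult_right_mono[OF x1 P0] by simp
    moreover have "1 * ?P \<le> ?a * ?P" by (rule mult_right_mono[OF a1 P0])
    ultimately show ?thesis by simp
  next
    case sT: True
    have cM: "card (insert e ?Ms) = card ?Ms + 1" using fMs by simp
    show ?thesis
    proof (cases "\<tau> (fst (ends e)) = \<tau> (snd (ends e))")
      case False
      have eMt: "e \<notin> ?Mt" using assms(2) unfolding mono_edges_def by auto
      from False have "?P' = ?x * ?P" unfolding SW_unfold mono_insert using sT fMs eMt
        by (simp add: cM Int_insert_left)
      then show ?thesis using x1 a1 P0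
        by (metis dual_order.trans mult_left_le_one_le mult_right_mono order_refl)
    next
      case True
      have N': "insert e ?Ms \<inter> insert e ?Mt = insert e (?Ms \<inter> ?Mt)" by auto
      have eq: "?P' = ?x * ?x ^ card ?Ms * sw V ends q \<beta> (insert e (?Ms \<inter> ?Mt))"
        unfolding SW_unfold mono_insert using sT True by (simp add: N' cM)
      have Peq: "?P = ?x ^ card ?Ms * sw V ends q \<beta> (?Ms \<inter> ?Mt)" unfolding SW_unfold ..
      note b = sw_insert_bound[where ends=ends, OF fN assms(3,4,5,6,7)]
      have xp: "?x * ?x ^ card ?Ms \<ge> 0" by simp
      have "?x * ?P = (?x * ?x ^ card ?Ms) * sw V ends q \<beta> (?Ms \<inter> ?Mt)" using Peq by simp
      also have "\<dots> \<le> ?P'" unfolding eq using b(1) xp by (intro mult_left_mono) auto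
      finally have L: "?x * ?P \<le> ?P'" .
      have "?P' \<le> (?x * ?x ^ card ?Ms) * (?a * sw V ends q \<beta> (?Ms \<inter> ?Mt))"
        unfolding eq using b(2) xp by (intro mult_left_mono) auto
      also have "\<dots> = ?x * (?a * ?P)" using Peq by simp
      also have "\<dots> \<le> ?a * ?P" using x1 a1 P0
        by (intro mult_left_le_one_le) auto
      finally show ?thesis using L by simp
    qed
  qed
qed

theorem lemma3p7:
  fixes V :: "'v set" and E E0 :: "'e set" and ends :: "'e \<Rightarrow> 'v \<times> 'v"
    and q :: nat and \<beta> :: real and \<sigma> \<tau> :: "'v \<Rightarrow> nat"
  assumes "finite V" and "finite E"
    and "\<forall>e\<in>E. fst (ends e) \<in> V \<and> snd (ends e) \<in> V"
    and "E0 \<subseteq> E"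
    and "\<beta> \<ge> 0"
    and "\<sigma> \<in> V \<rightarrow>\<^sub>E {1..q}" and "\<tau> \<in> V \<rightarrow>\<^sub>E {1..q}"
  shows "exp (- \<beta>) ^ card (E - E0) * SW_P V ends E0 q \<beta> \<sigma> \<tau> \<le> SW_P V ends E q \<beta> \<sigma> \<tau>
       \<and> SW_P V ends E q \<beta> \<sigma> \<tau>
           \<le> (1 + real q * (exp \<beta> - 1)) ^ card (E - E0) * SW_P V ends E0 q \<beta> \<sigma> \<tau>"
proof (cases "q = 0")
  case True
  have "V = {}"
  proof (rule ccontr)
    assume "V \<noteq> {}"
    then obtain v where "v \<in> V" by blast
    then have "\<sigma> v \<in> {1..q}" using assms(6) by auto
    then show False using True by simp
  qed
  then have "E = {}" using assms(3) by auto
  then have "E0 = {}" using assms(4) by auto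
  then show ?thesis using \<open>E = {}\<close> by simp
next
  case False
  then have q1: "q \<ge> 1" by simp
  let ?a = "1 + real q * (exp \<beta> - 1)"
  have a0: "?a \<ge> 0" using assms(5) by (simp add: add_nonneg_nonneg)
  have E0fin: "finite E0" using assms(2,4) finite_subset by blast
  have gen: "D \<subseteq> E - E0 \<Longrightarrow>
      exp (- \<beta>) ^ card D * SW_P V ends E0 q \<beta> \<sigma> \<tau> \<le> SW_P V ends (E0 \<union> D) q \<beta> \<sigma> \<tau>
    \<and> SW_P V ends (E0 \<union> D) q \<beta> \<sigma> \<tau> \<le> ?a ^ card D * SW_P V ends E0 q \<beta> \<sigma> \<tau>" for D
  proof -
    assume D: "D \<subseteq> E - E0"
    have "finite D" using D assms(2) by (meson finite_Diff finite_subset)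
    then show ?thesis using D
    proof (induction D rule: finite_induct)
      case empty
      then show ?case by simp
    next
      case (insert e D)
      have eE: "e \<in> E" "e \<notin> E0" using insert.prems by auto
      have IH: "exp (- \<beta>) ^ card D * SW_P V ends E0 q \<beta> \<sigma> \<tau> \<le> SW_P V ends (E0 \<union> D) q \<beta> \<sigma> \<tau>"
        "SW_P V ends (E0 \<union> D) q \<beta> \<sigma> \<tau> \<le> ?a ^ card D * SW_P V ends E0 q \<beta> \<sigma> \<tau>"
        using insert.IH insert.prems by auto
      have fin: "finite (E0 \<union> D)" using E0fin insert.hyps(1) by simp
      have en: "e \<notin> E0 \<union> D" using eE insert.hyps(2) by simp
      note st = step_bound[where ends=ends, OF fin en assms(5) q1 assms(1)]
      have ev: "fst (ends e) \<in> V" "snd (ends e) \<in> V" using assms(3) eE by auto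
      note st2 = st[OF ev, of \<sigma> \<tau>]
      have un: "E0 \<union> insert e D = insert e (E0 \<union> D)" by auto
      have cd: "card (insert e D) = Suc (card D)" using insert.hyps by simp
      have "exp (- \<beta>) ^ card (insert e D) * SW_P V ends E0 q \<beta> \<sigma> \<tau>
            = exp (- \<beta>) * (exp (- \<beta>) ^ card D * SW_P V ends E0 q \<beta> \<sigma> \<tau>)" by (simp add: cd)
      also have "\<dots> \<le> exp (- \<beta>) * SW_P V ends (E0 \<union> D) q \<beta> \<sigma> \<tau>"
        using IH(1) by (intro mult_left_mono) auto
      also have "\<dots> \<le> SW_P V ends (E0 \<union> insert e D) q \<beta> \<sigma> \<tau>" using st2 un by simp
      finally have L: "exp (- \<beta>) ^ card (insert e D) * SW_P V ends E0 q \<beta> \<sigma> \<tau>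
          \<le> SW_P V ends (E0 \<union> insert e D) q \<beta> \<sigma> \<tau>" .
      have "SW_P V ends (E0 \<union> insert e D) q \<beta> \<sigma> \<tau> \<le> ?a * SW_P V ends (E0 \<union> D) q \<beta> \<sigma> \<tau>"
        using st2 un by simp
      also have "\<dots> \<le> ?a * (?a ^ card D * SW_P V ends E0 q \<beta> \<sigma> \<tau>)"
        using IH(2) a0 by (intro mult_left_mono) auto
      also have "\<dots> = ?a ^ card (insert e D) * SW_P V ends E0 q \<beta> \<sigma> \<tau>" by (simp add: cd)
      finally show ?case using L by simp
    qed
  qed
  have "E0 \<union> (E - E0) = E" using assms(4) by auto
  then show ?thesis using gen[of "E - E0"] by simp
qed

end
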